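(* Let $u_1,u_2,u_3,x_1,x_2,x_3,z_1,z_2$ be strings and suppose a computation of the queue automaton passes through the configurations $$u_1u_2u_3\,\|\,x_1x_2x_3 \;\vdash^*\; u_2u_3z_1\,\|\,x_2x_3 \;\vdash^*\; u_3z_1z_2\,\|\,x_3,$$ so that $x_2$ is consumed by $u_2$ with resultant $z_2$. Then $u_2$ and $z_2$ are subsequences of $x_2$, and moreover $x_2$ is a shuffle of $u_2$ and $z_2$, i.e. $x_2 = u_2\odot z_2$.
   Context: Strings are over a finite alphabet $\Sigma$; $\varepsilon$ is the empty string. A string $w$ is a shuffle of $u$ and $v$, written $w=u\odot v$, if there are (possibly empty) strings $x_i,y_i$ with $u=x_1\cdots x_k$, $v=y_1\cdots y_k$ and $w=x_1y_1x_2y_2\cdots x_ky_k$. A string $u'$ is a subsequence of $w$ if $w=u'\odot v$ for some $v$. The queue automaton: a configuration is written $Q\,\|\,x$, where $Q$ is the queue contents and $x$ is the remaining input. A single step $C\vdash C'$ is one of: from $Q\,\|\,\sigma x$ (with $\sigma$ a symbol) go to $Q\sigma\,\|\,x$ ($\sigma$ is pushed onto the right end of the queue), or, if $Q=\sigma Q'$, go to $Q'\,\|\,x$ (the input symbol $\sigma$ is matched against, and pops, the leftmost queue symbol). $C\vdash^* C'$ means $C'$ is reached from $C$ in zero or more steps; a computation is such a sequence of steps. When a computation passes through configurations $u_1u_2u_3\,\|\,x_1x_2x_3 \vdash^* u_2u_3z_1\,\|\,x_2x_3 \vdash^* u_3z_1z_2\,\|\,x_3$ we say $x_2$ is consumed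 by $u_2$ with resultant $z_2$. *)

theory Defs
  imports Main
begin

definition is_shuffle :: "'a list \<Rightarrow> 'a list \<Rightarrow> 'a list \<Rightarrow> bool" where
  "is_shuffle w u v \<longleftrightarrow>
     (\<exists>xs ys. length xs = length ys \<and> u = concat xs \<and> v = concat ys \<and>
              w = concat (map (\<lambda>(a, b). a @ b) (zip xs ys)))"

definition is_subseq :: "'a list \<Rightarrow> 'a list \<Rightarrow> bool" where
  "is_subseq u' w \<longleftrightarrow> (\<exists>v. is_shuffle w u' v)"

text \<open>Configurations Q || x are pairs (queue contents, remaining input).
  Single step of the queue automaton.\<close>
inductive qstep :: "'a list \<times> 'a list \<Rightarrow> 'a list \<times> 'a list \<Rightarrow> bool" where
  push: "qstep (Q, \<sigma> # x) (Q @ [\<sigma>], x)"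
| pop:  "qstep (\<sigma> # Q, \<sigma> # x) (Q, x)"

text \<open>Computations C \<turnstile>* C' that additionally record the number n of push steps
  performed.  (Forgetting n gives exactly the reflexive transitive closure of qstep.)
  The push count is used to track the identity of queue symbols along a
  computation: the symbols pushed in a segment are exactly the last n symbols
  of the final queue.\<close>
inductive qsteps :: "'a list \<times> 'a list \<Rightarrow> nat \<Rightarrow> 'a list \<times> 'a list \<Rightarrow> bool" where
  refl: "qsteps C 0 C"
| push: "qsteps (Q @ [\<sigma>], x) n C \<Longrightarrow> qsteps (Q, \<sigma> # x) (Suc n) C"
| pop:  "qsteps (Q, x) n C \<Longrightarrow> qsteps (\<sigma> # Q, \<sigma> # x) n C"

end

theory Submission
  imports Defs
begin

lemma shuf_nil: "is_shuffle [] [] []"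
  unfolding is_shuffle_def by (rule exI[of _ "[]"], rule exI[of _ "[]"]) simp

lemma shuf_consR: "is_shuffle w u v \<Longrightarrow> is_shuffle (a#w) u (a#v)"
  unfolding is_shuffle_def
  apply (elim exE conjE)
  subgoal for xs ys
    by (rule exI[of _ "[]#xs"], rule exI[of _ "[a]#ys"]) simp
  done

lemma shuf_consL: "is_shuffle w u v \<Longrightarrow> is_shuffle (a#w) (a#u) v"
  unfolding is_shuffle_def
  apply (elim exE conjE)
  subgoal for xs ys
    apply (cases xs; cases ys)
       apply simp_all
      apply (rule exI[of _ "[[a]]"], rule exI[of _ "[[]]"], simp)
    subgoal for x1 xs' y1 ys'
      by (rule exI[of _ "(a#x1)#xs'"], rule exI[of _ "y1#ys'"]) simp
    done
  done

lemma inv: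
  "qsteps C n C' \<Longrightarrow> \<exists>P Z x. length Z = n \<and> snd C = x @ snd C' \<and>
     is_shuffle x P Z \<and> is_shuffle x Z P \<and> fst C @ Z = P @ fst C'"
proof (induction rule: qsteps.induct)
  case (refl C)
  then show ?case using shuf_nil by (intro exI[of _ "[]"]) simp
next
  case (push Q \<sigma> x n C)
  then obtain P Z y where "length Z = n" "x = y @ snd C" "is_shuffle y P Z"
    "is_shuffle y Z P" "Q @ [\<sigma>] @ Z = P @ fst C" by auto
  then show ?case
    by (intro exI[of _ P] exI[of _ "\<sigma>#Z"] exI[of _ "\<sigma>#y"])
       (simp add: shuf_consR shuf_consL)
next
  case (pop Q x n C \<sigma>)
  then obtain P Z y where "length Z = n" "x = y @ snd C" "is_shuffle y P Z"
    "is_shuffle y Z P" "Q @ Z = P @ fst C" by auto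
  then show ?case
    by (intro exI[of _ "\<sigma>#P"] exI[of _ Z] exI[of _ "\<sigma>#y"])
       (simp add: shuf_consR shuf_consL)
qed

theorem lemma1:
  fixes u1 u2 u3 x1 x2 x3 z1 z2 :: "'a::finite list"
  assumes "qsteps (u1 @ u2 @ u3, x1 @ x2 @ x3) (length z1) (u2 @ u3 @ z1, x2 @ x3)"
      and "qsteps (u2 @ u3 @ z1, x2 @ x3) (length z2) (u3 @ z1 @ z2, x3)"
  shows "is_subseq u2 x2 \<and> is_subseq z2 x2 \<and> is_shuffle x2 u2 z2"
proof -
  obtain P Z x where h: "length Z = length z2" "x2 @ x3 = x @ x3"
    "is_shuffle x P Z" "is_shuffle x Z P" "u2 @ (u3 @ z1 @ Z) = P @ (u3 @ z1 @ z2)"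
    using inv[OF assms(2)] by auto
  have "length (u2 @ u3 @ z1 @ Z) = length (P @ u3 @ z1 @ z2)" using h(5) by (simp only:)
  then have "length u2 = length P" using h(1) by simp
  then have "u2 = P \<and> u3 @ z1 @ Z = u3 @ z1 @ z2"
    using h(5) append_eq_append_conv[of u2 P] by blast
  then have e: "P = u2" "Z = z2" by auto
  have x: "x = x2" using h(2) by simp
  have "is_shuffle x2 u2 z2" "is_shuffle x2 z2 u2" using h(3,4) e x by auto
  then show ?thesis unfolding is_subseq_def by blast
qed

end
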